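(* Let $A$ be a $3\times 3$ matrix with real entries whose characteristic polynomial is $P(x)=x^3-bx^2+cx-d$, where $b>1$, $c>0$, $d\in(0,1)$, $1-d<b-c$ and $bc-d>0$. Then: (i) All the real roots of $P$ are located in the interval $(0,b)$. (ii) $P$ has at least one real root in the interval $(1,b)$. (iii) If $P$ has two (non-real) complex roots, then both are located in the unit disk. (iv) If all the roots of $P$ are real, then $P$ has at least one real root in the interval $(0,1)$. (v) $P$ has a single root in the interval $(1,b)$.
   Context: The unit disk means the open set $\{z\in\mathbb{C}:\ |z|<1\}$. *)

theory Defs
  imports "Jordan_Normal_Form.Char_Poly"
begin

end

theory Submission
  imports Defs
begin

lemma cubic_facts:
  fixes b c d :: real and f :: "real \<Rightarrow> real" and g :: "complex \<Rightarrow> complex"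
  assumes fdef: "\<And>x. f x = x^3 - b*x^2 + c*x - d"
    and gdef: "\<And>z. g z = z^3 - of_real b * z^2 + of_real c * z - of_real d"
    and hb: "b > 1" and hc: "c > 0" and hd0: "0 < d" and hd1: "d < 1"
    and h1: "1 - d < b - c" and h2: "b * c - d > 0"
  shows "(\<forall>x. f x = 0 \<longrightarrow> 0 < x \<and> x < b)
    \<and> (\<exists>x. 1 < x \<and> x < b \<and> f x = 0)
    \<and> ((\<exists>z. g z = 0 \<and> z \<notin> \<real>) \<longrightarrow> (\<forall>z. g z = 0 \<and> z \<notin> \<real> \<longrightarrow> cmod z < 1))
    \<and> ((\<forall>z. g z = 0 \<longrightarrow> z \<in> \<real>) \<longrightarrow> (\<exists>x. 0 < x \<and> x < 1 \<and> f x = 0))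
    \<and> (\<exists>!x. 1 < x \<and> x < b \<and> f x = 0)"
proof -
  have P1: "\<forall>x. f x = 0 \<longrightarrow> 0 < x \<and> x < b"
  proof (intro allI impI)
    fix x assume fx: "f x = 0"
    show "0 < x \<and> x < b"
    proof (rule ccontr)
      assume "\<not> (0 < x \<and> x < b)"
      then consider "x \<le> 0" | "x \<ge> b" by linarith
      then show False
      proof cases
        case 1
        have "x^3 \<le> 0" using 1 by (simp add: power3_eq_cube mult_nonneg_nonpos2 zero_le_mult_iff mult_le_0_iff)
        moreover have "b*x^2 \<ge> 0" using hb by simp
        moreover have "c*x \<le> 0" using hc 1 by (simp add: mult_nonneg_nonpos)
        ultimately have "f x < 0" using fdef[of x] hd0 by linarith
        then show False using fx by simp
      next
        case 2
        have "x^2*(x-b) \<ge> 0" using 2 by simp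
        moreover have "c*x \<ge> c*b" using 2 hc by simp
        moreover have "f x = x^2*(x-b) + c*x - d" using fdef[of x] by (simp add: algebra_simps power2_eq_square power3_eq_cube)
        ultimately have "f x > 0" using h2 by (simp add: algebra_simps)
        then show False using fx by simp
      qed
    qed
  qed
  have f1: "f 1 < 0" using fdef[of 1] h1 by simp
  have fb: "f b > 0" using fdef[of b] h2 by (simp add: power2_eq_square power3_eq_cube algebra_simps)
  have P2: "\<exists>x. 1 < x \<and> x < b \<and> f x = 0"
  proof -
    have "poly [:-d, c, -b, 1:] 1 < 0" "poly [:-d, c, -b, 1:] b > 0"
      using f1 fb fdef[of 1] fdef[of b] by (simp_all add: power2_eq_square power3_eq_cube algebra_simps)
    from poly_IVT_pos[OF hb this] obtain x where "1 < x" "x < b" "poly [:-d, c, -b, 1:] x = 0" by blast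
    then show ?thesis using fdef[of x] by (auto simp: power2_eq_square power3_eq_cube algebra_simps)
  qed
  have P5: "\<exists>!x. 1 < x \<and> x < b \<and> f x = 0"
  proof -
    obtain r where r: "1 < r" "r < b" "f r = 0" using P2 by blast
    have "x = r" if x: "1 < x" "x < b" "f x = 0" for x
    proof (rule ccontr)
      assume ne: "x \<noteq> r"
      have "(x - r) * (x^2 + x*r + r^2 - b*(x+r) + c) = f x - f r"
        using fdef[of x] fdef[of r] by (simp add: algebra_simps power2_eq_square power3_eq_cube)
      then have q: "x^2 + x*r + r^2 - b*(x+r) + c = 0" using x r ne by simp
      define t where "t = b - x - r"
      have fx0: "x^3 - b*x^2 + c*x - d = 0" using fdef[of x] x(3) by simp
      have cq: "c = b*(x+r) - x^2 - x*r - r^2" using q by simp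
      have dx: "d = x^3 - b*x^2 + c*x" using fx0 by simp
      have dq: "d = x*r*t" unfolding t_def dx cq by (simp add: algebra_simps power2_eq_square power3_eq_cube)
      have "f 1 = 1 - b + c - d" using fdef[of 1] by simp
      also have "\<dots> = (1-x)*(1-r)*(1-t)" unfolding dq cq t_def by (simp add: algebra_simps power2_eq_square)
      finally have "f 1 = (1-x)*(1-r)*(1-t)" .
      then have "(1-x)*(1-r)*(1-t) < 0" using f1 by simp
      moreover have "(1-x)*(1-r) > 0" using x r by (simp add: mult_neg_neg)
      ultimately have "1 - t < 0" using x r by (auto simp add: mult_less_0_iff)
      then have "t > 1" by simp
      moreover have "x*r > 1" using x r by (simp add: less_1_mult)
      ultimately have "x*r*t > 1" by (simp add: less_1_mult)
      then show False using dq hd1 by simp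
    qed
    then show ?thesis using r by blast
  qed
  have P3: "\<forall>z. g z = 0 \<and> z \<notin> \<real> \<longrightarrow> cmod z < 1"
  proof (intro allI impI)
    fix z assume "g z = 0 \<and> z \<notin> \<real>"
    then have gz: "g z = 0" and v0: "Im z \<noteq> 0" by (auto simp: complex_is_Real_iff)
    define u where "u = Re z"
    define v where "v = Im z"
    have zuv: "z = Complex u v" unfolding u_def v_def by simp
    have "Re (g z) = 0" "Im (g z) = 0" using gz by auto
    then have re: "u^3 - 3*u*v^2 - b*(u^2-v^2) + c*u - d = 0"
      and im: "v * (3*u^2 - v^2 - 2*b*u + c) = 0"
      unfolding gdef zuv by (simp_all add: power2_eq_square power3_eq_cube algebra_simps)
    have im2: "3*u^2 - v^2 - 2*b*u + c = 0" using im v0 unfolding v_def by simp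
    define s where "s = b - 2*u"
    define m where "m = u^2 + v^2"
    have v2: "v^2 = 3*u^2 - 2*b*u + c" using im2 by simp
    have dre: "d = u^3 - 3*u*v^2 - b*(u^2-v^2) + c*u" using re by simp
    have ds: "d = m * s" unfolding dre m_def s_def v2 by (simp add: algebra_simps power2_eq_square power3_eq_cube)
    have fact: "f x = (x^2 - 2*u*x + m) * (x - s)" for x
      unfolding fdef ds unfolding m_def s_def v2 by (simp add: algebra_simps power2_eq_square power3_eq_cube)
    obtain r where r: "1 < r" "r < b" "f r = 0" using P2 by blast
    have pos: "r^2 - 2*u*r + m > 0"
    proof -
      have "r^2 - 2*u*r + m = (r-u)^2 + v^2" unfolding m_def by (simp add: power2_eq_square algebra_simps)
      moreover have "v^2 > 0" using v0 unfolding v_def by simp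
      ultimately show ?thesis by (smt (verit) zero_le_power2)
    qed
    have "r = s" using fact[of r] r(3) pos by simp
    then have "m < 1" using ds r hd1 by (smt (verit) mult_less_cancel_left1 m_def zero_le_power2 add_nonneg_nonneg)
    have "cmod z = sqrt m" unfolding zuv m_def by (simp add: cmod_def)
    then show "cmod z < 1" using \<open>m < 1\<close> by simp
  qed
  have P4: "(\<forall>z. g z = 0 \<longrightarrow> z \<in> \<real>) \<longrightarrow> (\<exists>x. 0 < x \<and> x < 1 \<and> f x = 0)"
  proof
    assume allr: "\<forall>z. g z = 0 \<longrightarrow> z \<in> \<real>"
    obtain r where r: "1 < r" "r < b" "f r = 0" using P2 by blast
    define p where "p = r - b"
    define q where "q = c + r*p"
    have dr: "d = r^3 - b*r^2 + c*r" using fdef[of r] r(3) by simp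
    have dq: "d = r*q" unfolding dr q_def p_def by (simp add: algebra_simps power2_eq_square power3_eq_cube)
    have fact: "f x = (x - r) * (x^2 + p*x + q)" for x
      using dq fdef[of x] unfolding q_def p_def
      by (simp add: algebra_simps power2_eq_square power3_eq_cube)
    have gfact: "g z = (z - of_real r) * (z^2 + of_real p * z + of_real q)" for z
      unfolding gdef dq q_def p_def
      by (simp add: algebra_simps power2_eq_square power3_eq_cube)
    have disc: "p^2 - 4*q \<ge> 0"
    proof (rule ccontr)
      assume "\<not> ?thesis"
      then have D: "4*q - p^2 > 0" by simp
      define w where "w = sqrt (4*q - p^2)"
      have w2: "w^2 = 4*q - p^2" unfolding w_def using D by simp
      have wpos: "w > 0" unfolding w_def using D by simp
      define z where "z = Complex (-p/2) (w/2)"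
      have "z^2 + of_real p * z + of_real q = 0"
        unfolding z_def using w2 by (simp add: complex_eq_iff power2_eq_square algebra_simps)
      then have "g z = 0" using gfact by simp
      moreover have "z \<notin> \<real>" unfolding z_def using wpos by (simp add: complex_is_Real_iff)
      ultimately show False using allr by blast
    qed
    define w where "w = sqrt (p^2 - 4*q)"
    have w2: "w^2 = p^2 - 4*q" unfolding w_def using disc by simp
    define s1 where "s1 = (-p + w)/2"
    define s2 where "s2 = (-p - w)/2"
    have ww: "w*w = p*p - 4*q" using w2 by (simp add: power2_eq_square)
    have "s1*s2 = (p*p - w*w)/4" unfolding s1_def s2_def by (simp add: field_simps)
    then have prod: "s1*s2 = q" unfolding ww by simp
    have "s1^2 + p*s1 + q = (w*w - p*p + 4*q)/4" "s2^2 + p*s2 + q = (w*w - p*p + 4*q)/4"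
      unfolding s1_def s2_def power2_eq_square by (simp_all add: field_simps)
    then have "s1^2 + p*s1 + q = 0" "s2^2 + p*s2 + q = 0" unfolding ww by simp_all
    then have fs: "f s1 = 0" "f s2 = 0" using fact by simp_all
    then have pos: "s1 > 0" "s2 > 0" using P1 by auto
    have "q < 1"
    proof (rule ccontr)
      assume "\<not> q < 1"
      then have "1*1 \<le> r*q" using r by (intro mult_mono) auto
      then show False using dq hd1 by simp
    qed
    have "s1 < 1 \<or> s2 < 1"
    proof (rule ccontr)
      assume "\<not> ?thesis"
      then have "1*1 \<le> s1*s2" by (intro mult_mono) auto
      then show False using prod \<open>q < 1\<close> by simp
    qed
    then show "\<exists>x. 0 < x \<and> x < 1 \<and> f x = 0" using fs pos by blast
  qed
  show ?thesis using P1 P2 P3 P4 P5 by blast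
qed

theorem proposition4p1:
  fixes A :: "real mat" and b c d :: real
  assumes A: "A \<in> carrier_mat 3 3"
    and P: "char_poly A = [:-d, c, -b, 1:]"
    and hb: "b > 1" and hc: "c > 0" and hd0: "0 < d" and hd1: "d < 1"
    and h1: "1 - d < b - c" and h2: "b * c - d > 0"
  shows "(\<forall>x::real. poly (char_poly A) x = 0 \<longrightarrow> 0 < x \<and> x < b)
    \<and> (\<exists>x::real. 1 < x \<and> x < b \<and> poly (char_poly A) x = 0)
    \<and> ((\<exists>z::complex. poly (map_poly complex_of_real (char_poly A)) z = 0 \<and> z \<notin> \<real>) \<longrightarrow>
         (\<forall>z::complex. poly (map_poly complex_of_real (char_poly A)) z = 0 \<and> z \<notin> \<real> \<longrightarrow> cmod z < 1))
    \<and> ((\<forall>z::complex. poly (map_poly complex_of_real (char_poly A)) z = 0 \<longrightarrow> z \<in> \<real>) \<longrightarrow>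
         (\<exists>x::real. 0 < x \<and> x < 1 \<and> poly (char_poly A) x = 0))
    \<and> (\<exists>!x::real. 1 < x \<and> x < b \<and> poly (char_poly A) x = 0)"
proof -
  have f: "\<And>x. poly (char_poly A) x = x^3 - b*x^2 + c*x - d"
    unfolding P by (simp add: algebra_simps power2_eq_square power3_eq_cube)
  have g: "\<And>z. poly (map_poly complex_of_real (char_poly A)) z = z^3 - of_real b * z^2 + of_real c * z - of_real d"
    unfolding P by (simp add: map_poly_pCons algebra_simps power2_eq_square power3_eq_cube)
  show ?thesis
    by (rule cubic_facts[OF f g hb hc hd0 hd1 h1 h2])
qed

end
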